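(* A $\star$-metric space $(X,d^\star)$ is complete if and only if for every decreasing sequence $F_1\supseteq F_2\supseteq F_3\supseteq\cdots$ of nonempty closed subsets of $X$ with $\lim_{n\to\infty}\delta(F_n)=0$, the intersection $\bigcap_{n=1}^\infty F_n$ is a one-point set.
   Context: A $t$-definer is a function $\star:[0,\infty)\times[0,\infty)\to[0,\infty)$ such that for all $a,b,c\ge 0$: $a\star b=b\star a$; $a\star(b\star c)=(a\star b)\star c$; if $a\le b$ then $a\star c\le b\star c$; $a\star 0=a$; and $\star$ is continuous in its first variable with respect to the Euclidean topology. Given a nonempty set $X$ and a $t$-definer $\star$, a $\star$-metric on $X$ is a function $d^\star:X\times X\to[0,\infty)$ such that for all $x,y,z\in X$: $d^\star(x,y)=0$ iff $x=y$; $d^\star(x,y)=d^\star(y,x)$; and $d^\star(x,y)\le d^\star(x,z)\star d^\star(z,y)$. Closedness refers to the topology $\mathscr{T}_{d^\star}$ consisting of all $U\subseteq X$ such that for each $a\in U$ there is $r>0$ with $\{x: d^\star(a,x)<r\}\subseteq U$. The diameter of $A\subseteq X$ is $\delta(A)=\sup_{x,y\in A}d^\star(x,y)$ (possibly $\infty$), with $\delta(\emptyset)=0$. A sequence $\{x_n\}$ is Cauchy if for every $\epsilon>0$ there is $k$ with $d^\star(x_n,x_m)<\epsilon$ for all $m,n\ge k$; it converges to $x$ if for every $\epsilon>0$ there is $k$ with $d^\star(x,x_n)<\epsilon$ for $n\ge k$. $(X,d^\star)$ is complete if every Cauchy sequence converges to a point of $X$. *)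

theory Defs
  imports "HOL-Analysis.Analysis" "HOL-Library.Extended_Real"
begin

definition t_definer :: "(real \<Rightarrow> real \<Rightarrow> real) \<Rightarrow> bool" where
  "t_definer s \<longleftrightarrow>
     (\<forall>a\<ge>0. \<forall>b\<ge>0. s a b \<ge> 0) \<and>
     (\<forall>a\<ge>0. \<forall>b\<ge>0. s a b = s b a) \<and>
     (\<forall>a\<ge>0. \<forall>b\<ge>0. \<forall>c\<ge>0. s a (s b c) = s (s a b) c) \<and>
     (\<forall>a\<ge>0. \<forall>b\<ge>0. \<forall>c\<ge>0. a \<le> b \<longrightarrow> s a c \<le> s b c) \<and>
     (\<forall>a\<ge>0. s a 0 = a) \<and>
     (\<forall>c\<ge>0. continuous_on {0..} (\<lambda>a. s a c))"

definition star_metric :: "(real \<Rightarrow> real \<Rightarrow> real) \<Rightarrow> 'a set \<Rightarrow> ('a \<Rightarrow> 'a \<Rightarrow> real) \<Rightarrow> bool" where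
  "star_metric s X d \<longleftrightarrow>
     (\<forall>x\<in>X. \<forall>y\<in>X. d x y \<ge> 0) \<and>
     (\<forall>x\<in>X. \<forall>y\<in>X. d x y = 0 \<longleftrightarrow> x = y) \<and>
     (\<forall>x\<in>X. \<forall>y\<in>X. d x y = d y x) \<and>
     (\<forall>x\<in>X. \<forall>y\<in>X. \<forall>z\<in>X. d x y \<le> s (d x z) (d z y))"

definition sm_open :: "'a set \<Rightarrow> ('a \<Rightarrow> 'a \<Rightarrow> real) \<Rightarrow> 'a set \<Rightarrow> bool" where
  "sm_open X d U \<longleftrightarrow> U \<subseteq> X \<and>
     (\<forall>a\<in>U. \<exists>r>0. {x\<in>X. d a x < r} \<subseteq> U)"

definition sm_closed :: "'a set \<Rightarrow> ('a \<Rightarrow> 'a \<Rightarrow> real) \<Rightarrow> 'a set \<Rightarrow> bool" where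
  "sm_closed X d F \<longleftrightarrow> F \<subseteq> X \<and> sm_open X d (X - F)"

definition sm_diam :: "('a \<Rightarrow> 'a \<Rightarrow> real) \<Rightarrow> 'a set \<Rightarrow> ereal" where
  "sm_diam d A = (if A = {} then 0 else (SUP p\<in>A \<times> A. ereal (d (fst p) (snd p))))"

definition sm_cauchy :: "'a set \<Rightarrow> ('a \<Rightarrow> 'a \<Rightarrow> real) \<Rightarrow> (nat \<Rightarrow> 'a) \<Rightarrow> bool" where
  "sm_cauchy X d x \<longleftrightarrow> (\<forall>e>0. \<exists>k. \<forall>m\<ge>k. \<forall>n\<ge>k. d (x n) (x m) < e)"

definition sm_converges :: "'a set \<Rightarrow> ('a \<Rightarrow> 'a \<Rightarrow> real) \<Rightarrow> (nat \<Rightarrow> 'a) \<Rightarrow> 'a \<Rightarrow> bool" where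
  "sm_converges X d x l \<longleftrightarrow> (\<forall>e>0. \<exists>k. \<forall>n\<ge>k. d l (x n) < e)"

definition sm_complete :: "'a set \<Rightarrow> ('a \<Rightarrow> 'a \<Rightarrow> real) \<Rightarrow> bool" where
  "sm_complete X d \<longleftrightarrow>
     (\<forall>x. (\<forall>n. x n \<in> X) \<longrightarrow> sm_cauchy X d x \<longrightarrow> (\<exists>l\<in>X. sm_converges X d x l))"

end

theory Submission
  imports Defs
begin

lemma td_nonneg: "t_definer s \<Longrightarrow> 0 \<le> a \<Longrightarrow> 0 \<le> b \<Longrightarrow> 0 \<le> s a b"
  unfolding t_definer_def by (elim conjE) (rule mp[OF spec[of _ b]], rule mp[OF spec[of _ a]])

lemma td_comm: "t_definer s \<Longrightarrow> 0 \<le> a \<Longrightarrow> 0 \<le> b \<Longrightarrow> s a b = s b a"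
  unfolding t_definer_def by (elim conjE) (rule mp[OF spec[of _ b]], rule mp[OF spec[of _ a]])

lemma td_mono: "t_definer s \<Longrightarrow> 0 \<le> a \<Longrightarrow> 0 \<le> b \<Longrightarrow> 0 \<le> c \<Longrightarrow> a \<le> b \<Longrightarrow> s a c \<le> s b c"
proof -
  assume T: "t_definer s" and h: "0 \<le> a" "0 \<le> b" "0 \<le> c" "a \<le> b"
  have "\<forall>a\<ge>0. \<forall>b\<ge>0. \<forall>c\<ge>0. a \<le> b \<longrightarrow> s a c \<le> s b c"
    using T unfolding t_definer_def by (elim conjE)
  thus ?thesis using h by simp
qed

lemma td_zero: "t_definer s \<Longrightarrow> 0 \<le> a \<Longrightarrow> s a 0 = a"
proof -
  assume T: "t_definer s" and h: "0 \<le> a"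
  have "\<forall>a\<ge>0. s a 0 = a"
    using T unfolding t_definer_def by (elim conjE)
  thus ?thesis using h by simp
qed

lemma td_cont: "t_definer s \<Longrightarrow> 0 \<le> c \<Longrightarrow> continuous_on {0..} (\<lambda>a. s a c)"
proof -
  assume T: "t_definer s" and h: "0 \<le> c"
  have "\<forall>c\<ge>0. continuous_on {0..} (\<lambda>a. s a c)"
    using T unfolding t_definer_def by (elim conjE)
  thus ?thesis using h by simp
qed

lemma td_mono2:
  assumes T: "t_definer s" and h: "0 \<le> a" "a \<le> a'" "0 \<le> b" "b \<le> b'"
  shows "s a b \<le> s a' b'"
proof -
  have a': "0 \<le> a'" and b': "0 \<le> b'" using h by linarith+
  have "s a b \<le> s a' b" by (rule td_mono[OF T h(1) a' h(3) h(2)])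
  also have "\<dots> = s b a'" by (rule td_comm[OF T a' h(3)])
  also have "\<dots> \<le> s b' a'" by (rule td_mono[OF T h(3) b' a' h(4)])
  also have "\<dots> = s a' b'" by (rule td_comm[OF T b' a'])
  finally show ?thesis .
qed

lemma td_small:
  assumes T: "t_definer s" and r: "r > 0"
  shows "\<exists>e>0. s e e < r"
proof -
  have r2: "0 \<le> r/2" "0 < r/2" using r by simp_all
  have c: "continuous_on {0..} (\<lambda>a. s a (r/2))" by (rule td_cont[OF T r2(1)])
  have "s 0 (r/2) = s (r/2) 0" by (rule td_comm[OF T order_refl r2(1)])
  also have "\<dots> = r/2" by (rule td_zero[OF T r2(1)])
  finally have v: "s 0 (r/2) = r/2" .
  have "\<exists>dl>0. \<forall>x'\<in>{0..}. dist x' 0 < dl \<longrightarrow> dist (s x' (r/2)) (s 0 (r/2)) < r/2"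
    by (rule c[unfolded continuous_on_iff, rule_format]) (use r2 in simp_all)
  then obtain dl where dl: "dl > 0" "\<forall>x'\<in>{0..}. dist x' 0 < dl \<longrightarrow> dist (s x' (r/2)) (s 0 (r/2)) < r/2"
    by blast
  have "dist (s (dl/2) (r/2)) (s 0 (r/2)) < r/2" using dl by simp
  hence "dist (s (dl/2) (r/2)) (r/2) < r/2" using v by simp
  hence h: "s (dl/2) (r/2) < r" unfolding dist_real_def by arith
  define e where "e = min (dl/2) (r/2)"
  have e0: "e > 0" using dl r by (simp add: e_def)
  have "s e e \<le> s (dl/2) (r/2)"
    by (rule td_mono2[OF T]) (use e0 in \<open>simp_all add: e_def\<close>)
  hence "s e e < r" using h by linarith
  thus ?thesis using e0 by blast
qed

lemma td_small3:
  assumes T: "t_definer s" and r: "r > 0"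
  shows "\<exists>e>0. s e (s e e) < r"
proof -
  obtain e1 where e1: "e1 > 0" "s e1 e1 < r" using td_small[OF T r] by blast
  obtain e2 where e2: "e2 > 0" "s e2 e2 < e1" using td_small[OF T e1(1)] by blast
  define e where "e = min e1 e2"
  have e0: "e > 0" using e1 e2 by (simp add: e_def)
  have "s e e \<le> s e2 e2" by (rule td_mono2[OF T]) (use e0 in \<open>simp_all add: e_def\<close>)
  hence see: "s e e \<le> e1" using e2 by linarith
  have "s e (s e e) \<le> s e1 e1"
    by (rule td_mono2[OF T _ _ td_nonneg[OF T] see]) (use e0 in \<open>simp_all add: e_def\<close>)
  hence "s e (s e e) < r" using e1 by linarith
  thus ?thesis using e0 by blast
qed

lemma diam_upper:
  assumes "x \<in> A" "y \<in> A"
  shows "ereal (d x y) \<le> sm_diam d A"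
proof -
  have ne: "A \<noteq> {}" using assms by blast
  have xy: "(x, y) \<in> A \<times> A" using assms by blast
  have "ereal (d (fst (x,y)) (snd (x,y))) \<le> (SUP p\<in>A \<times> A. ereal (d (fst p) (snd p)))"
    by (rule SUP_upper[OF xy])
  thus ?thesis using ne unfolding sm_diam_def by simp
qed

lemma diam_le:
  assumes H: "\<And>x y. x \<in> A \<Longrightarrow> y \<in> A \<Longrightarrow> d x y \<le> r" and r: "0 \<le> r"
  shows "sm_diam d A \<le> ereal r"
proof (cases "A = {}")
  case True
  thus ?thesis using r unfolding sm_diam_def by simp
next
  case False
  have "(SUP p\<in>A \<times> A. ereal (d (fst p) (snd p))) \<le> ereal r"
  proof (rule SUP_least)
    fix p assume "p \<in> A \<times> A"
    hence "fst p \<in> A" "snd p \<in> A" by auto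
    thus "ereal (d (fst p) (snd p)) \<le> ereal r" using H by simp
  qed
  thus ?thesis using False unfolding sm_diam_def by simp
qed

lemma diam_nonneg:
  assumes H: "\<And>x y. x \<in> A \<Longrightarrow> y \<in> A \<Longrightarrow> 0 \<le> d x y"
  shows "0 \<le> sm_diam d A"
proof (cases "A = {}")
  case True
  thus ?thesis unfolding sm_diam_def by simp
next
  case False
  then obtain x where x: "x \<in> A" by blast
  have "ereal 0 \<le> ereal (d x x)" using H[OF x x] by simp
  also have "\<dots> \<le> sm_diam d A" by (rule diam_upper[OF x x])
  finally show ?thesis by (simp add: zero_ereal_def)
qed

theorem theorem4p9:
  fixes s :: "real \<Rightarrow> real \<Rightarrow> real" and X :: "'a set" and d :: "'a \<Rightarrow> 'a \<Rightarrow> real"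
  assumes "t_definer s" and "X \<noteq> {}" and "star_metric s X d"
  shows "sm_complete X d \<longleftrightarrow>
    (\<forall>F :: nat \<Rightarrow> 'a set.
       (\<forall>n. F n \<noteq> {} \<and> sm_closed X d (F n)) \<longrightarrow>
       (\<forall>n. F (Suc n) \<subseteq> F n) \<longrightarrow>
       ((\<lambda>n. sm_diam d (F n)) \<longlonglongrightarrow> 0) \<longrightarrow>
       (\<exists>x. (\<Inter>n. F n) = {x}))"
proof -
  note T = assms(1)
  have SM: "(\<forall>x\<in>X. \<forall>y\<in>X. d x y \<ge> 0) \<and>
     (\<forall>x\<in>X. \<forall>y\<in>X. d x y = 0 \<longleftrightarrow> x = y) \<and>
     (\<forall>x\<in>X. \<forall>y\<in>X. d x y = d y x) \<and>
     (\<forall>x\<in>X. \<forall>y\<in>X. \<forall>z\<in>X. d x y \<le> s (d x z) (d z y))"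
    using assms(3) unfolding star_metric_def .
  have dnn: "\<And>x y. x \<in> X \<Longrightarrow> y \<in> X \<Longrightarrow> 0 \<le> d x y" using SM by simp
  have d0: "\<And>x y. x \<in> X \<Longrightarrow> y \<in> X \<Longrightarrow> d x y = 0 \<longleftrightarrow> x = y" using SM by simp
  have dsym: "\<And>x y. x \<in> X \<Longrightarrow> y \<in> X \<Longrightarrow> d x y = d y x" using SM by simp
  have tri: "\<And>x y z. x \<in> X \<Longrightarrow> y \<in> X \<Longrightarrow> z \<in> X \<Longrightarrow> d x y \<le> s (d x z) (d z y)"
    using SM by blast
  show ?thesis
  proof
    assume C: "sm_complete X d"
    show "\<forall>F :: nat \<Rightarrow> 'a set.
       (\<forall>n. F n \<noteq> {} \<and> sm_closed X d (F n)) \<longrightarrow>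
       (\<forall>n. F (Suc n) \<subseteq> F n) \<longrightarrow>
       ((\<lambda>n. sm_diam d (F n)) \<longlonglongrightarrow> 0) \<longrightarrow>
       (\<exists>x. (\<Inter>n. F n) = {x})"
    proof (intro allI impI)
      fix F :: "nat \<Rightarrow> 'a set"
      assume H: "\<forall>n. F n \<noteq> {} \<and> sm_closed X d (F n)" and dec: "\<forall>n. F (Suc n) \<subseteq> F n"
        and lim: "(\<lambda>n. sm_diam d (F n)) \<longlonglongrightarrow> 0"
      have FX: "F n \<subseteq> X" for n using H unfolding sm_closed_def by blast
      have mono: "m \<le> n \<Longrightarrow> F n \<subseteq> F m" for m n
        using dec by (simp add: decseq_SucI decseqD)
      have small: "\<exists>k. \<forall>x\<in>F k. \<forall>y\<in>F k. d x y < e" if "e > 0" for e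
      proof -
        have "eventually (\<lambda>n. sm_diam d (F n) < ereal e) sequentially"
          using lim that by (simp add: order_tendstoD(2))
        then obtain k where "sm_diam d (F k) < ereal e" by (auto simp: eventually_sequentially)
        thus ?thesis using diam_upper[of _ "F k" _ d] by (meson ereal_less(2) le_less_trans ereal_less_eq(3) less_ereal.simps(1))
      qed
      define x where "x n = (SOME y. y \<in> F n)" for n
      have xF: "x n \<in> F n" for n using H unfolding x_def by (simp add: some_in_eq)
      have xX: "x n \<in> X" for n using xF FX by blast
      have "sm_cauchy X d x" unfolding sm_cauchy_def
      proof (intro allI impI)
        fix e :: real assume "e > 0"
        then obtain k where k: "\<forall>x\<in>F k. \<forall>y\<in>F k. d x y < e" using small by blast
        show "\<exists>k. \<forall>m\<ge>k. \<forall>n\<ge>k. d (x n) (x m) < e"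
          using k xF mono by blast
      qed
      then obtain l where l: "l \<in> X" "sm_converges X d x l" using C xX unfolding sm_complete_def by blast
      have lF: "l \<in> F k" for k
      proof (rule ccontr)
        assume "l \<notin> F k"
        then obtain r where r: "r > 0" "{z\<in>X. d l z < r} \<subseteq> X - F k"
          using H l(1) unfolding sm_closed_def sm_open_def by blast
        obtain k' where "\<forall>n\<ge>k'. d l (x n) < r" using l(2) r(1) unfolding sm_converges_def by blast
        hence "d l (x (max k k')) < r" by simp
        hence "x (max k k') \<notin> F k" using r xX by blast
        moreover have "x (max k k') \<in> F k" using xF mono[of k "max k k'"] by auto
        ultimately show False by blast
      qed
      have "(\<Inter>n. F n) = {l}"
      proof (rule set_eqI, rule iffI)
        fix y assume y: "y \<in> (\<Inter>n. F n)"
        have yX: "y \<in> X" using y FX by blast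
        have "d y l < e" if "e > 0" for e using small[OF that] y lF by blast
        hence "d y l \<le> 0" by (metis less_irrefl not_le)
        hence "d y l = 0" using dnn[OF yX l(1)] by linarith
        thus "y \<in> {l}" using d0[OF yX l(1)] by simp
      qed (use lF in auto)
      thus "\<exists>x. (\<Inter>n. F n) = {x}" by blast
    qed
  next
    assume P: "\<forall>F :: nat \<Rightarrow> 'a set.
       (\<forall>n. F n \<noteq> {} \<and> sm_closed X d (F n)) \<longrightarrow>
       (\<forall>n. F (Suc n) \<subseteq> F n) \<longrightarrow>
       ((\<lambda>n. sm_diam d (F n)) \<longlonglongrightarrow> 0) \<longrightarrow>
       (\<exists>x. (\<Inter>n. F n) = {x})"
    show "sm_complete X d" unfolding sm_complete_def
    proof (intro allI impI)
      fix x :: "nat \<Rightarrow> 'a" assume xX: "\<forall>n. x n \<in> X" and cau: "sm_cauchy X d x"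
      define S where "S n = {y\<in>X. \<forall>r>0. \<exists>m\<ge>n. d y (x m) < r}" for n
      have xS: "x n \<in> S n" for n
      proof -
        have "d (x n) (x n) = 0" using d0 xX by simp
        hence "\<forall>r>0. \<exists>m\<ge>n. d (x n) (x m) < r" by (metis order_refl)
        thus ?thesis using xX unfolding S_def by blast
      qed
      have SX: "S n \<subseteq> X" for n unfolding S_def by blast
      have closed: "sm_closed X d (S n)" for n
        unfolding sm_closed_def sm_open_def
      proof (intro conjI ballI SX)
        show "X - S n \<subseteq> X" by blast
        fix a assume a: "a \<in> X - S n"
        then obtain r where r: "r > 0" "\<forall>m\<ge>n. \<not> d a (x m) < r" unfolding S_def by blast
        obtain e where e: "e > 0" "s e e < r" using td_small[OF T r(1)] by blast
        have "{z\<in>X. d a z < e} \<subseteq> X - S n"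
        proof
          fix y assume y: "y \<in> {z\<in>X. d a z < e}"
          show "y \<in> X - S n"
          proof (rule ccontr)
            assume "y \<notin> X - S n"
            then obtain m where m: "m \<ge> n" "d y (x m) < e" using y e(1) unfolding S_def by blast
            have aX: "a \<in> X" and yX: "y \<in> X" and dy: "d a y < e" using a y by auto
            have xm: "x m \<in> X" using xX by blast
            have "d a (x m) \<le> s (d a y) (d y (x m))" using tri[OF aX xm yX] .
            also have "\<dots> \<le> s e e"
              using td_mono2[OF T dnn[OF aX yX] less_imp_le[OF dy] dnn[OF yX xm] less_imp_le[OF m(2)]] .
            finally show False using r(2)[rule_format, OF m(1)] e by linarith
          qed
        qed
        thus "\<exists>r>0. {z\<in>X. d a z < r} \<subseteq> X - S n" using e(1) by blast
      qed
      have decS: "S (Suc n) \<subseteq> S n" for n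
      proof
        fix y assume "y \<in> S (Suc n)"
        hence "y \<in> X" "\<forall>r>0. \<exists>m\<ge>Suc n. d y (x m) < r" unfolding S_def by auto
        moreover have "\<forall>r>0. \<exists>m\<ge>n. d y (x m) < r" using calculation(2) Suc_leD by blast
        ultimately show "y \<in> S n" unfolding S_def by blast
      qed
      have diamS: "\<exists>k. \<forall>n\<ge>k. sm_diam d (S n) \<le> ereal \<eta>" if eta: "\<eta> > 0" for \<eta>
      proof -
        obtain e where e: "e > 0" "s e (s e e) < \<eta>" using td_small3[OF T eta] by blast
        obtain k where k: "\<forall>m\<ge>k. \<forall>n\<ge>k. d (x n) (x m) < e" using cau e(1) unfolding sm_cauchy_def by blast
        have "sm_diam d (S n) \<le> ereal \<eta>" if n: "n \<ge> k" for n
        proof (rule diam_le)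
          show "0 \<le> \<eta>" using \<open>\<eta> > 0\<close> by simp
          fix y z assume y: "y \<in> S n" and z: "z \<in> S n"
          obtain m where m: "m \<ge> n" "d y (x m) < e" using y e(1) unfolding S_def by blast
          obtain m' where m': "m' \<ge> n" "d z (x m') < e" using z e(1) unfolding S_def by blast
          have yX: "y \<in> X" and zX: "z \<in> X" using y z SX by auto
          have xm: "x m \<in> X" and xm': "x m' \<in> X" using xX by blast+
          have dmm: "d (x m) (x m') < e" using k m m' n by simp
          have dmz: "d (x m') z < e" using m'(2) dsym[OF zX xm'] by simp
          have see: "0 \<le> s e e" using td_nonneg[OF T, of e e] e(1) by simp
          have h1: "d (x m) z \<le> s (d (x m) (x m')) (d (x m') z)" using tri[OF xm zX xm'] .
          have h2: "s (d (x m) (x m')) (d (x m') z) \<le> s e e"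
            using td_mono2[OF T dnn[OF xm xm'] less_imp_le[OF dmm] dnn[OF xm' zX] less_imp_le[OF dmz]] .
          have "d y z \<le> s (d y (x m)) (d (x m) z)" using tri[OF yX zX xm] .
          also have "\<dots> \<le> s e (s e e)"
            using td_mono2[OF T dnn[OF yX xm] less_imp_le[OF m(2)] dnn[OF xm zX] order_trans[OF h1 h2]] .
          finally show "d y z \<le> \<eta>" using e(2) by linarith
        qed
        thus ?thesis by blast
      qed
      have lim: "(\<lambda>n. sm_diam d (S n)) \<longlonglongrightarrow> 0"
      proof (rule order_tendstoI)
        fix l :: ereal assume "l < 0"
        moreover have "0 \<le> sm_diam d (S n)" for n
          by (rule diam_nonneg) (meson SX dnn subsetD)
        ultimately show "eventually (\<lambda>n. l < sm_diam d (S n)) sequentially"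
          by (intro always_eventually allI) (metis less_le_trans)
      next
        fix u :: ereal assume u: "u > 0"
        have "\<exists>\<eta>. \<eta> > 0 \<and> ereal \<eta> < u"
        proof (cases u)
          case (real r)
          thus ?thesis using u by (intro exI[of _ "r/2"]) auto
        next
          case PInf
          thus ?thesis by (intro exI[of _ 1]) auto
        next
          case MInf
          thus ?thesis using u by simp
        qed
        then obtain \<eta> where \<eta>: "\<eta> > 0" "ereal \<eta> < u" by blast
        then obtain k where "\<forall>n\<ge>k. sm_diam d (S n) \<le> ereal \<eta>" using diamS by blast
        hence "\<forall>n\<ge>k. sm_diam d (S n) < u" using \<eta>(2) by (meson le_less_trans)
        thus "eventually (\<lambda>n. sm_diam d (S n) < u) sequentially"
          unfolding eventually_sequentially by blast
      qed
      have A1: "\<And>n. S n \<noteq> {} \<and> sm_closed X d (S n)" using xS closed by blast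
      have A2: "\<And>n. S (Suc n) \<subseteq> S n" by (rule decS)
      obtain l where l: "(\<Inter>n. S n) = {l}" using P[rule_format, OF A1 A2 lim] by blast
      have lS: "l \<in> S n" for n using l by blast
      have lX: "l \<in> X" using lS SX by blast
      have "sm_converges X d x l" unfolding sm_converges_def
      proof (intro allI impI)
        fix \<eta> :: real assume "\<eta> > 0"
        obtain e where e: "e > 0" "s e e < \<eta>" using td_small[OF T \<open>\<eta> > 0\<close>] by blast
        obtain k where k: "\<forall>m\<ge>k. \<forall>n\<ge>k. d (x n) (x m) < e" using cau e(1) unfolding sm_cauchy_def by blast
        obtain m where m: "m \<ge> k" "d l (x m) < e" using lS[of k] e(1) unfolding S_def by blast
        have "d l (x n) < \<eta>" if "n \<ge> k" for n
        proof -
          have xm: "x m \<in> X" and xn: "x n \<in> X" using xX by blast+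
          have dmn: "d (x m) (x n) < e" using k m(1) that by blast
          have "d l (x n) \<le> s (d l (x m)) (d (x m) (x n))" using tri[OF lX xn xm] .
          also have "\<dots> \<le> s e e"
            using td_mono2[OF T dnn[OF lX xm] less_imp_le[OF m(2)] dnn[OF xm xn] less_imp_le[OF dmn]] .
          finally show ?thesis using e by linarith
        qed
        thus "\<exists>k. \<forall>n\<ge>k. d l (x n) < \<eta>" by blast
      qed
      thus "\<exists>l\<in>X. sm_converges X d x l" using lX by blast
    qed
  qed
qed

end
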